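(* There exists an absolute constant $C>0$ such that the following holds. Let $\mathcal J$ be a joint distribution of $(p_1,p_2,y)\in[0,1]\times[0,1]\times\{0,1\}$, let $\mathcal D_1$ be the distribution of $(p_1,y)$ and $\mathcal D_2$ the distribution of $(p_2,y)$. Then $$|\mathsf{SCDL}(\mathcal D_1)^2-\mathsf{SCDL}(\mathcal D_2)^2|\le C\,\mathbb E_{\mathcal J}|p_1-p_2|\quad\text{and}\quad |\mathsf{SCDL}(\mathcal D_1)-\mathsf{SCDL}(\mathcal D_2)|\le C\sqrt{\mathbb E_{\mathcal J}|p_1-p_2|}.$$
   Context: For $x\in\mathbb R$ write $x_+=\max\{x,0\}$. For a distribution $\mathcal D$ of $(p,y)\in[0,1]\times\{0,1\}$, a positive integer $m$ and $i\in\{0,\ldots,m\}$, let $w_i(p)=(1-|mp-i|)_+$, $\pi_i=\mathbb E_{\mathcal D}[w_i(p)]$ and $q_i=\mathbb E_{\mathcal D}[w_i(p)y]/\pi_i$ (terms with $\pi_i=0$ are $0$). These are the bin weights and bin conditional means after randomly rounding $p$ to a neighbouring multiple $p'$ of $1/m$ with $\Pr[p'=i/m\mid p]=w_i(p)$. Define $$\mathsf{SCDL}_m(\mathcal D)=\max_{i=0,\ldots,m}\Big(\sum_{j=0}^{i}\pi_j\big(q_j-\tfrac{i+1}{m}\big)_+ +\sum_{j=i+1}^{m}\pi_j\big(\tfrac im-q_j\big)_+\Big),\quad \mathsf{SCDL}(\mathcal D)=\inf_{m\in\{2^1,2^2,\ldots\}}\max\{\mathsf{SCDL}_m(\mathcal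 D),1/m\}.$$ *)

theory Defs
  imports "HOL-Probability.Probability"
begin

text \<open>A distribution D of (p,y) in [0,1] x {0,1} is a measure on real x bool
  (product of Borel and discrete sigma-algebras); y is encoded as a bool.\<close>

definition pospart :: "real \<Rightarrow> real" where
  "pospart x = max x 0"

definition rwt :: "nat \<Rightarrow> nat \<Rightarrow> real \<Rightarrow> real" where
  "rwt m i p = pospart (1 - \<bar>real m * p - real i\<bar>)"

definition bin_weight :: "(real \<times> bool) measure \<Rightarrow> nat \<Rightarrow> nat \<Rightarrow> real" where
  "bin_weight D m i = (\<integral>z. rwt m i (fst z) \<partial>D)"

definition bin_mean :: "(real \<times> bool) measure \<Rightarrow> nat \<Rightarrow> nat \<Rightarrow> real" where
  "bin_mean D m i = (if bin_weight D m i = 0 then 0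
      else (\<integral>z. rwt m i (fst z) * (if snd z then 1 else 0) \<partial>D) / bin_weight D m i)"

definition SCDL_m :: "(real \<times> bool) measure \<Rightarrow> nat \<Rightarrow> real" where
  "SCDL_m D m = Max ((\<lambda>i.
      (\<Sum>j\<in>{0..i}. bin_weight D m j * pospart (bin_mean D m j - real (i + 1) / real m))
    + (\<Sum>j\<in>{i+1..m}. bin_weight D m j * pospart (real i / real m - bin_mean D m j))) ` {0..m})"

definition SCDL :: "(real \<times> bool) measure \<Rightarrow> real" where
  "SCDL D = (INF k\<in>{1::nat..}. max (SCDL_m D (2 ^ k)) (1 / 2 ^ k))"

end

theory Submission
  imports Defs
begin


lemma pow_small:
  fixes x :: real assumes "\<forall>k\<ge>1. x \<le> 1 / 2 ^ k" shows "x \<le> 0"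
proof (rule ccontr)
  assume "\<not> x \<le> 0" hence "x > 0" by simp
  obtain n where n: "(1/2::real) ^ n < x" using real_arch_pow_inv[OF \<open>x>0\<close>, of "1/2"] by auto
  define k where "k = max n 1"
  have "(1/2::real) ^ k \<le> (1/2) ^ n" unfolding k_def by (rule power_decreasing) auto
  moreover have "x \<le> (1/2) ^ k" using assms k_def by (simp add: power_one_over)
  ultimately show False using n by linarith
qed

lemma choose_k:
  fixes e :: real
  assumes e: "0 < e" "e \<le> 1" and K: "K \<ge> 1" "1 / 4 ^ K \<le> e"
  shows "\<exists>k. 1 \<le> k \<and> k \<le> K \<and> 1 / 4 ^ k \<le> e \<and> (k = 1 \<or> e < 1 / 4 ^ (k - 1))"
proof -
  define P where "P k \<longleftrightarrow> 1 \<le> k \<and> 1 / (4::real) ^ k \<le> e" for k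
  have PK: "P K" using K P_def by simp
  define k where "k = (LEAST k. P k)"
  have Pk: "P k" unfolding k_def by (rule LeastI[of P K, OF PK])
  have kK: "k \<le> K" unfolding k_def by (rule Least_le[of P, OF PK])
  have "k = 1 \<or> e < 1 / 4 ^ (k - 1)"
  proof (rule ccontr)
    assume "\<not> (k = 1 \<or> e < 1 / 4 ^ (k - 1))"
    hence "P (k - 1)" using Pk unfolding P_def by auto
    hence "k \<le> k - 1" unfolding k_def[symmetric] by (metis Least_le k_def)
    thus False using Pk P_def by auto
  qed
  thus ?thesis using Pk kK P_def by auto
qed

lemma sq_bound:
  fixes x e L :: real
  assumes "x > 0" "L \<ge> 0" "0 \<le> g" "g \<le> 1/x + L*x*e" "1 \<le> x^2*e" "x^2*e^2 \<le> 4*e"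
  shows "g^2 \<le> (1+2*L)^2 * e"
proof -
  have "g^2 \<le> (1/x + L*x*e)^2" using assms by (intro power_mono) auto
  also have "\<dots> = 1/x^2 + 2*L*e + L^2*(x^2*e^2)" using assms(1)
    by (simp add: power2_eq_square field_simps)
  also have "\<dots> \<le> e + 2*L*e + L^2*(4*e)"
  proof -
    have "1/x^2 \<le> e" using assms(1,5) by (simp add: field_simps)
    moreover have "L^2*(x^2*e^2) \<le> L^2*(4*e)" using assms(6) by (intro mult_left_mono) auto
    ultimately show ?thesis by linarith
  qed
  also have "\<dots> \<le> (1+2*L)^2 * e"
  proof -
    have "e \<ge> 0" using assms(5,6) by (smt (verit) zero_le_power2 mult_nonneg_nonneg)
    thus ?thesis using assms(2) by (simp add: power2_eq_square algebra_simps)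
  qed
  finally show ?thesis .
qed


lemma Q_bound:
  fixes g e L :: real
  assumes e: "0 < e" "e \<le> 1" and L: "L \<ge> 0" and g0: "0 \<le> g"
    and K: "K \<ge> 1" "1 / 4 ^ K \<le> e"
    and H: "\<forall>k. 1 \<le> k \<and> k \<le> K \<longrightarrow> g \<le> 1/2^k + L*2^k*e"
  shows "g^2 \<le> (1+2*L)^2 * e"
proof -
  obtain k where k: "1 \<le> k" "k \<le> K" "1 / 4 ^ k \<le> e" "k = 1 \<or> e < 1 / 4 ^ (k - 1)"
    using choose_k[OF e K] by blast
  define x :: real where "x = 2^k"
  have x0: "x > 0" unfolding x_def by simp
  have x2: "x^2 = 4^k" unfolding x_def power2_eq_square by (simp flip: power_mult_distrib)
  have g: "g \<le> 1/x + L*x*e" using H k unfolding x_def by (simp add: power_one_over)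
  have c1: "1 \<le> x^2*e" using k(3) x2 by (simp add: field_simps)
  have c2: "x^2*e^2 \<le> 4*e"
  proof (cases "k = 1")
    case True
    then have "x = 2" unfolding x_def by simp
    then show ?thesis using e by (simp add: power2_eq_square)
  next
    case False
    then have "e < 1 / 4 ^ (k - 1)" using k by auto
    moreover have "(4::real) ^ k = 4 * 4^(k-1)" using k(1) by (metis Suc_diff_le diff_Suc_1 power_Suc)
    ultimately have "x^2 * e < 4" using x2 by (simp add: field_simps)
    hence "x^2*e*e \<le> 4*e" using e by (intro mult_right_mono) auto
    thus ?thesis by (simp add: power2_eq_square algebra_simps)
  qed
  show ?thesis by (rule sq_bound[OF x0 L g0 g c1 c2])
qed

lemma abstract_bound:
  fixes a b :: "nat \<Rightarrow> real" and L B e :: real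
  assumes mono: "\<And>k. k \<ge> 1 \<Longrightarrow> b k \<le> b (Suc k)"
    and bnd: "\<And>k. k \<ge> 1 \<Longrightarrow> b k \<le> B"
    and lip: "\<And>k. k \<ge> 1 \<Longrightarrow> a k \<le> b k + L * 2^k * e"
    and e: "0 \<le> e" "e \<le> 1" and L: "L \<ge> 0" and B: "B \<ge> 0"
  shows "(INF k\<in>{1..}. max (a k) (1/2^k))^2
     \<le> (INF k\<in>{1..}. max (b k) (1/2^k))^2 + ((1+2*L)^2 + 4*L*B + 4*L^2 + 4*L) * e"
proof -
  define ga where "ga = (INF k\<in>{1::nat..}. max (a k) (1/2^k))"
  define gb where "gb = (INF k\<in>{1::nat..}. max (b k) (1/2^k))"
  define C where "C = (1+2*L)^2 + 4*L*B + 4*L^2 + 4*L"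
  have C1: "(1+2*L)^2 \<le> C" "4*L*B + 4*L^2 \<le> C" "4*L + 4*L^2 \<le> C"
    unfolding C_def using L B by (auto simp: power2_eq_square)
  have bdda: "bdd_below ((\<lambda>k. max (a k) (1/2^k)) ` {1..})"
    by (rule bdd_belowI[of _ 0]) (auto simp: le_max_iff_disj)
  have bddb: "bdd_below ((\<lambda>k. max (b k) (1/2^k)) ` {1..})"
    by (rule bdd_belowI[of _ 0]) (auto simp: le_max_iff_disj)
  have gaL: "ga \<le> max (a k) (1/2^k)" if "k \<ge> 1" for k
    unfolding ga_def using that by (intro cINF_lower[OF bdda]) auto
  have gbL: "gb \<le> max (b k) (1/2^k)" if "k \<ge> 1" for k
    unfolding gb_def using that by (intro cINF_lower[OF bddb]) auto
  have gbG: "c \<le> gb" if "\<And>k. k \<ge> 1 \<Longrightarrow> c \<le> max (b k) (1/2^k)" for c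
    unfolding gb_def using that by (intro cINF_greatest) auto
  have ga0: "0 \<le> ga" unfolding ga_def
    by (intro cINF_greatest) (auto simp: le_max_iff_disj)
  have gb0: "0 \<le> gb" by (rule gbG) (auto simp: le_max_iff_disj)
  have H: "ga \<le> max (b k) (1/2^k) + L*2^k*e" if "k \<ge> 1" for k
  proof -
    have "0 \<le> L*2^k*e" using L e by simp
    hence "max (a k) (1/2^k) \<le> max (b k) (1/2^k) + L*2^k*e" using lip[OF that] by linarith
    thus ?thesis using gaL[OF that] by linarith
  qed
  have monob: "b k \<le> b k'" if "1 \<le> k" "k \<le> k'" for k k'
    using that(2,1)
  proof (induction k' rule: dec_induct)
    case base then show ?case by simp
  next
    case (step n) then show ?case using mono[of n] by simp
  qed
  have sq_step: "ga^2 \<le> gb^2 + C*e" if "ga \<le> gb + L*x*e" "x > 0" "gb * x \<le> 2" "x^2 * e \<le> 4" for x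
  proof -
    have "ga^2 \<le> (gb + L*x*e)^2" using that ga0 by (intro power_mono) auto
    also have "\<dots> = gb^2 + 2*L*e*(gb*x) + L^2*(x^2*e)*e" by (simp add: power2_eq_square algebra_simps)
    also have "\<dots> \<le> gb^2 + 2*L*e*2 + L^2*4*e"
    proof -
      have "2*L*e*(gb*x) \<le> 2*L*e*2" using that L e by (intro mult_left_mono) auto
      moreover have "L^2*(x^2*e)*e \<le> L^2*4*e" using that L e
        by (intro mult_right_mono mult_left_mono) auto
      ultimately show ?thesis by linarith
    qed
    also have "\<dots> \<le> gb^2 + C*e"
    proof -
      have "(4*L + 4*L^2)*e \<le> C*e" using C1(3) e by (intro mult_right_mono) auto
      thus ?thesis by (simp add: algebra_simps)
    qed
    finally show ?thesis .
  qed
  have "ga^2 \<le> gb^2 + C*e"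
  proof (cases "b 1 > 1/2")
    case True
    have "gb = b 1"
    proof (rule antisym)
      show "gb \<le> b 1" using gbL[of 1] True by simp
      show "b 1 \<le> gb" by (rule gbG) (use monob in \<open>auto intro: order.trans[OF _ max.cobounded1]\<close>)
    qed
    have "ga \<le> gb + L*2*e" using H[of 1] True \<open>gb = b 1\<close> by simp
    hence "ga^2 \<le> (gb + L*2*e)^2" using ga0 by (intro power_mono) auto
    also have "\<dots> = gb^2 + 4*L*e*gb + 4*L^2*e*e" by (simp add: power2_eq_square algebra_simps)
    also have "\<dots> \<le> gb^2 + 4*L*e*B + 4*L^2*e"
    proof -
      have "gb \<le> B" using bnd[of 1] \<open>gb = b 1\<close> by simp
      hence "4*L*e*gb \<le> 4*L*e*B" using L e by (intro mult_left_mono) auto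
      moreover have "4*L^2*e*e \<le> 4*L^2*e*1" using L e by (intro mult_left_mono) auto
      ultimately show ?thesis by linarith
    qed
    also have "\<dots> \<le> gb^2 + C*e"
    proof -
      have "(4*L*B + 4*L^2)*e \<le> C*e" using C1(2) e by (intro mult_right_mono) auto
      thus ?thesis by (simp add: algebra_simps)
    qed
    finally show ?thesis .
  next
    case False
    show ?thesis
    proof (cases "\<forall>k\<ge>1. b k \<le> 1/2^k")
      case True
      have Hk: "ga \<le> 1/2^k + L*2^k*e" if "k \<ge> 1" for k using H[OF that] True that by simp
      show ?thesis
      proof (cases "e = 0")
        case True
        have "ga \<le> 0" using Hk True by (intro pow_small) auto
        then show ?thesis using ga0 True by simp
      next
        case False
        hence e0: "e > 0" using e by simp
        obtain K where K: "(1/4::real) ^ K < e" using real_arch_pow_inv[OF e0, of "1/4"] by auto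
        define K' where "K' = max K 1"
        have "(1/4::real) ^ K' \<le> (1/4) ^ K" unfolding K'_def by (rule power_decreasing) auto
        hence K': "K' \<ge> 1" "1/4^K' \<le> e" using K by (auto simp: K'_def power_one_over)
        have "ga^2 \<le> (1+2*L)^2 * e" using Q_bound[OF e0 e(2) L ga0 K'] Hk by blast
        then show ?thesis using C1(1) gb0 e by (smt (verit) mult_right_mono zero_le_power2)
      qed
    next
      case False
      define P where "P k \<longleftrightarrow> 1 \<le> k \<and> \<not> b k \<le> 1/2^k" for k
      obtain k1 where "P k1" using False P_def by auto
      define K where "K = (LEAST k. P k)"
      have PK: "P K" unfolding K_def by (rule LeastI[of P k1, OF \<open>P k1\<close>])
      have notP: "\<not> P k" if "k < K" for k using not_less_Least[of k P] that K_def by simp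
      have K2: "K \<ge> 2" using PK \<open>\<not> b 1 > 1/2\<close> unfolding P_def by (cases "K = 1") auto
      define k0 where "k0 = K - 1"
      have k0: "k0 \<ge> 1" "K = Suc k0" using K2 unfolding k0_def by auto
      have Pk: "b k \<le> 1/2^k" if "1 \<le> k" "k \<le> k0" for k using notP[of k] that k0 P_def by auto
      have bK: "b K > 1/2^K" using PK P_def by auto
      have gbU1: "gb \<le> 1/2^k0" using gbL[OF k0(1)] Pk[OF k0(1)] by simp
      have gbU2: "gb \<le> b K" using gbL[of K] bK K2 by simp
      have gbLo: "1/2^K \<le> gb"
      proof (rule gbG)
        fix k :: nat assume k: "k \<ge> 1"
        show "1/2^K \<le> max (b k) (1/2^k)"
        proof (cases "k \<le> k0")
          case True
          have "(1/2::real)^K \<le> (1/2)^k" using True k0 by (intro power_decreasing) auto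
          then show ?thesis by (simp add: power_one_over)
        next
          case False
          hence "K \<le> k" using k0 by simp
          hence "b K \<le> b k" using monob K2 by simp
          then show ?thesis using bK by simp
        qed
      qed
      have gamin: "ga \<le> gb + L*2^K*e"
      proof -
        have "(2::real)^k0 \<le> 2^K" using k0 by simp
        hence "L*2^k0*e \<le> L*2^K*e" using L e by (intro mult_right_mono mult_left_mono) auto
        hence h1: "ga \<le> 1/2^k0 + L*2^K*e" using H[OF k0(1)] Pk[OF k0(1)] by simp
        have h2: "ga \<le> b K + L*2^K*e" using H[of K] bK K2 by simp
        have "gb = 1/2^k0 \<or> gb = b K"
        proof -
          have "min (1/2^k0) (b K) \<le> gb"
          proof (rule gbG)
            fix k :: nat assume k: "k \<ge> 1"
            show "min (1/2^k0) (b K) \<le> max (b k) (1/2^k)"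
            proof (cases "k \<le> k0")
              case True
              have "(1/2::real)^k0 \<le> (1/2)^k" using True k0 by (intro power_decreasing) auto
              then show ?thesis by (simp add: power_one_over)
            next
              case False
              hence "K \<le> k" using k0 by simp
              hence "b K \<le> b k" using monob K2 by simp
              then show ?thesis by simp
            qed
          qed
          then show ?thesis using gbU1 gbU2 by linarith
        qed
        then show ?thesis using h1 h2 by auto
      qed
      show ?thesis
      proof (cases "e * 4^k0 \<le> 1")
        case True
        define x :: real where "x = 2^K"
        have x0: "x > 0" unfolding x_def by simp
        have xk: "x = 2 * 2^k0" unfolding x_def using k0 by simp
        have "gb * x \<le> 2" using gbU1 unfolding xk by (simp add: field_simps)
        moreover have "x^2 * e \<le> 4"
        proof -
          have "x^2 = 4 * 4^k0" unfolding xk by (simp add: power2_eq_square power_mult_distrib[symmetric] flip: power_mult_distrib)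
          then show ?thesis using True by (simp add: algebra_simps)
        qed
        ultimately show ?thesis using sq_step[of x] gamin x0 unfolding x_def by simp
      next
        case False
        hence e0: "e > 0" using e by (cases "e = 0") auto
        have K': "1 / 4^k0 \<le> e" using False by (simp add: field_simps)
        have Hk: "\<forall>k. 1 \<le> k \<and> k \<le> k0 \<longrightarrow> ga \<le> 1/2^k + L*2^k*e"
          using H Pk by fastforce
        have "ga^2 \<le> (1+2*L)^2 * e" using Q_bound[OF e0 e(2) L ga0 k0(1) K' Hk] .
        then show ?thesis using C1(1) gb0 e by (smt (verit) mult_right_mono zero_le_power2)
      qed
    qed
  qed
  then show ?thesis unfolding ga_def gb_def C_def .
qed




definition hat :: "nat \<Rightarrow> int \<Rightarrow> real \<Rightarrow> real" where
  "hat m j p = max (1 - \<bar>real m * p - of_int j\<bar>) 0"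

definition yv :: "bool \<Rightarrow> real" where "yv b = (if b then 1 else 0)"

definition AA :: "(real \<times> bool) measure \<Rightarrow> nat \<Rightarrow> int \<Rightarrow> real \<Rightarrow> real" where
  "AA D m j t = (\<integral>z. hat m j (fst z) * (yv (snd z) - t) \<partial>D)"

definition good :: "(real \<times> bool) measure \<Rightarrow> bool" where
  "good D \<longleftrightarrow> prob_space D \<and> sets D = sets (borel \<Otimes>\<^sub>M count_space UNIV) \<and>
     (AE z in D. fst z \<in> {0..1})"

lemma hat_nn: "0 \<le> hat m j p" unfolding hat_def by simp
lemma hat_le1: "hat m j p \<le> 1" unfolding hat_def by simp
lemma yv_01: "0 \<le> yv b" "yv b \<le> 1" unfolding yv_def by auto

lemma meas_prod: "(\<lambda>z. f (fst z) * g (snd z)) \<in> borel_measurable (borel \<Otimes>\<^sub>M count_space UNIV)"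
  if "f \<in> borel_measurable borel" for f :: "real \<Rightarrow> real" and g :: "bool \<Rightarrow> real"
  using that by measurable

lemma hat_meas: "hat m j \<in> borel_measurable borel"
  unfolding hat_def by (intro borel_measurable_continuous_onI continuous_intros)

lemma meas_D: fixes D :: "(real \<times> bool) measure" and f :: "real \<Rightarrow> real" and g :: "bool \<Rightarrow> real"
  assumes "sets D = sets (borel \<Otimes>\<^sub>M count_space UNIV)"
  and "f \<in> borel_measurable borel"
  shows "(\<lambda>z. f (fst z) * g (snd z)) \<in> borel_measurable D"
  using meas_prod[OF assms(2)] measurable_cong_sets[OF assms(1) refl] by blast

lemma integrable_D: fixes D :: "(real \<times> bool) measure" and f :: "real \<Rightarrow> real" and g :: "bool \<Rightarrow> real"
  and B1 B2 :: real assumes "good D" "f \<in> borel_measurable borel" "\<And>p. \<bar>f p\<bar> \<le> B1" "\<And>y. \<bar>g y\<bar> \<le> B2"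
  shows "integrable D (\<lambda>z. f (fst z) * g (snd z))"
proof -
  interpret prob_space D using assms(1) good_def by blast
  show ?thesis
  proof (rule integrable_const_bound[where B="B1*B2"])
    show "AE x in D. norm (f (fst x) * g (snd x)) \<le> B1 * B2"
      using assms(3,4) by (auto simp: abs_mult intro!: mult_mono order.trans[OF abs_ge_zero assms(3)])
    show "(\<lambda>z. f (fst z) * g (snd z)) \<in> borel_measurable D"
      using assms(1,2) good_def meas_D by blast
  qed
qed


lemma rwt_hat: "rwt m i p = hat m (int i) p"
  unfolding rwt_def hat_def pospart_def by simp

lemma integ_hat: "good D \<Longrightarrow> integrable D (\<lambda>z. hat m j (fst z))"
  using integrable_D[of D "hat m j" 1 "\<lambda>_. 1" 1] hat_meas hat_nn hat_le1 by simp

lemma integ_hat_yv: "good D \<Longrightarrow> integrable D (\<lambda>z. hat m j (fst z) * yv (snd z))"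
  using integrable_D[of D "hat m j" 1 "yv" 1] hat_meas hat_nn hat_le1 yv_01
  by (simp add: abs_le_iff)

lemma AA_eq: assumes "good D"
  shows "AA D m j t = (\<integral>z. hat m j (fst z) * yv (snd z) \<partial>D) - t * (\<integral>z. hat m j (fst z) \<partial>D)"
proof -
  have "AA D m j t = (\<integral>z. hat m j (fst z) * yv (snd z) - t * hat m j (fst z) \<partial>D)"
    unfolding AA_def by (simp add: algebra_simps)
  also have "\<dots> = (\<integral>z. hat m j (fst z) * yv (snd z) \<partial>D) - (\<integral>z. t * hat m j (fst z) \<partial>D)"
    by (rule Bochner_Integration.integral_diff[OF integ_hat_yv[OF assms] integrable_mult_right[OF integ_hat[OF assms]]])
  finally show ?thesis by simp
qed

lemma YW: assumes "good D"
  shows "0 \<le> (\<integral>z. hat m j (fst z) * yv (snd z) \<partial>D)"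
    "(\<integral>z. hat m j (fst z) * yv (snd z) \<partial>D) \<le> (\<integral>z. hat m j (fst z) \<partial>D)"
proof -
  show "0 \<le> (\<integral>z. hat m j (fst z) * yv (snd z) \<partial>D)"
    by (intro integral_nonneg_AE AE_I2 mult_nonneg_nonneg hat_nn yv_01)
  show "(\<integral>z. hat m j (fst z) * yv (snd z) \<partial>D) \<le> (\<integral>z. hat m j (fst z) \<partial>D)"
    using integ_hat[OF assms] integ_hat_yv[OF assms]
    by (intro integral_mono) (auto intro: mult_left_le yv_01 hat_nn)
qed

lemma binterm: assumes "good D"
  shows "bin_weight D m j * pospart (bin_mean D m j - t) = pospart (AA D m (int j) t)"
    "bin_weight D m j * pospart (t - bin_mean D m j) = pospart (- AA D m (int j) t)"
proof -
  define W where "W = (\<integral>z. hat m (int j) (fst z) \<partial>D)"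
  define Y where "Y = (\<integral>z. hat m (int j) (fst z) * yv (snd z) \<partial>D)"
  have bw: "bin_weight D m j = W" unfolding bin_weight_def W_def rwt_hat ..
  have bm: "bin_mean D m j = (if W = 0 then 0 else Y / W)"
    unfolding bin_mean_def bw unfolding Y_def rwt_hat yv_def by simp
  have A: "AA D m (int j) t = Y - t * W" unfolding Y_def W_def by (rule AA_eq[OF assms])
  have Y0: "0 \<le> Y" "Y \<le> W" unfolding Y_def W_def using YW[OF assms] by auto
  show "bin_weight D m j * pospart (bin_mean D m j - t) = pospart (AA D m (int j) t)"
  proof (cases "W = 0")
    case True then show ?thesis using Y0 unfolding bw bm A pospart_def by simp
  next
    case False then have "W > 0" using Y0 by simp
    then show ?thesis unfolding bw bm A pospart_def using False
      by (simp add: max_mult_distrib_left algebra_simps)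
  qed
  show "bin_weight D m j * pospart (t - bin_mean D m j) = pospart (- AA D m (int j) t)"
  proof (cases "W = 0")
    case True then show ?thesis using Y0 unfolding bw bm A pospart_def by simp
  next
    case False then have "W > 0" using Y0 by simp
    then show ?thesis unfolding bw bm A pospart_def using False
      by (simp add: max_mult_distrib_left algebra_simps)
  qed
qed

definition FF :: "(real \<times> bool) measure \<Rightarrow> nat \<Rightarrow> nat \<Rightarrow> real" where
  "FF D m i = (\<Sum>j\<in>{0..i}. pospart (AA D m (int j) (real (i + 1) / real m)))
    + (\<Sum>j\<in>{i+1..m}. pospart (- AA D m (int j) (real i / real m)))"

lemma SCDL_m_FF: "good D \<Longrightarrow> SCDL_m D m = Max (FF D m ` {0..m})"
  unfolding SCDL_m_def FF_def by (simp add: binterm)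


lemma AA_anti: assumes "good D" "t \<le> t'" shows "AA D m j t' \<le> AA D m j t"
proof -
  have "0 \<le> (\<integral>z. hat m j (fst z) \<partial>D)" by (intro integral_nonneg_AE AE_I2 hat_nn)
  then show ?thesis using AA_eq[OF assms(1)] assms(2) by (simp add: mult_right_mono)
qed

lemma hat_split: "hat m j p = hat (2*m) (2*j) p + hat (2*m) (2*j+1) p / 2 + hat (2*m) (2*j-1) p / 2"
proof -
  define u where "u = real m * p - of_int j"
  have a: "real (2*m) * p - of_int (2*j) = 2*u" unfolding u_def by (simp add: algebra_simps)
  have b: "real (2*m) * p - of_int (2*j+1) = 2*u - 1" unfolding u_def by (simp add: algebra_simps)
  have c: "real (2*m) * p - of_int (2*j-1) = 2*u + 1" unfolding u_def by (simp add: algebra_simps)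
  show ?thesis unfolding hat_def a b c u_def[symmetric] by (simp add: max_def abs_if) 
qed

lemma integ_AA: "good D \<Longrightarrow> integrable D (\<lambda>z. hat m j (fst z) * (yv (snd z) - t))"
  using integrable_D[of D "hat m j" 1 "\<lambda>y. yv y - t" "1 + \<bar>t\<bar>"] hat_meas hat_nn hat_le1 yv_01
  by (simp add: abs_le_iff) (smt (verit) yv_01)

lemma AA_split: assumes "good D"
  shows "AA D m j t = AA D (2*m) (2*j) t + AA D (2*m) (2*j+1) t / 2 + AA D (2*m) (2*j-1) t / 2"
proof -
  let ?f = "\<lambda>k z. hat (2*m) k (fst z) * (yv (snd z) - t)"
  have "AA D m j t = (\<integral>z. ?f (2*j) z + ?f (2*j+1) z / 2 + ?f (2*j-1) z / 2 \<partial>D)"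
    unfolding AA_def by (subst hat_split) (simp add: algebra_simps)
  also have "\<dots> = (\<integral>z. ?f (2*j) z \<partial>D) + (\<integral>z. ?f (2*j+1) z / 2 \<partial>D) + (\<integral>z. ?f (2*j-1) z / 2 \<partial>D)"
    using integ_AA[OF assms] by simp
  also have "\<dots> = AA D (2*m) (2*j) t + AA D (2*m) (2*j+1) t / 2 + AA D (2*m) (2*j-1) t / 2"
    unfolding AA_def by simp
  finally show ?thesis .
qed

lemma AA_out: assumes "good D"
  shows "AA D (2*m) (-1) t = 0" "AA D (2*m) (2*int m+1) t = 0"
proof -
  have ae: "AE z in D. fst z \<in> {0..1}" using assms good_def by blast
  show "AA D (2*m) (-1) t = 0" unfolding AA_def
  proof (rule integral_eq_zero_AE)
    show "AE z in D. hat (2*m) (-1) (fst z) * (yv (snd z) - t) = 0"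
      using ae by eventually_elim (auto simp: hat_def)
  qed
  show "AA D (2*m) (2*int m+1) t = 0" unfolding AA_def
  proof (rule integral_eq_zero_AE)
    show "AE z in D. hat (2*m) (2*int m+1) (fst z) * (yv (snd z) - t) = 0"
    proof (rule AE_mp[OF ae], rule AE_I2, rule impI)
      fix z :: "real \<times> bool" assume "fst z \<in> {0..1}"
      hence "real m * fst z \<le> real m" by (simp add: mult_left_le)
      hence "1 - \<bar>real (2*m) * fst z - of_int (2*int m+1)\<bar> \<le> 0" by simp
      thus "hat (2*m) (2*int m+1) (fst z) * (yv (snd z) - t) = 0" unfolding hat_def by simp
    qed
  qed
qed


lemma pos_sub: "pospart (a + b/2 + c/2) \<le> pospart a + pospart b / 2 + pospart c / 2"
  unfolding pospart_def by (simp add: max_def)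

lemma pos_sub_neg: "pospart (- (a + b/2 + c/2)) \<le> pospart (-a) + pospart (-b) / 2 + pospart (-c) / 2"
  unfolding pospart_def by (simp add: max_def)

lemma pos_mono: "a \<le> b \<Longrightarrow> pospart a \<le> pospart b"
  unfolding pospart_def by simp

lemma pos_nn: "0 \<le> pospart a"
  unfolding pospart_def by simp

lemma R1: fixes P :: "int \<Rightarrow> real"
  shows "(\<Sum>j\<in>{0..i::nat}. P (2*int j) + P (2*int j+1)/2 + P (2*int j-1)/2)
     = P (-1)/2 + (\<Sum>j\<in>{0..2*i}. P (int j)) + P (2*int i+1)/2"
proof (induction i)
  case 0 then show ?case by simp
next
  case (Suc i)
  have e: "{0..2*Suc i} = insert (Suc (Suc (2*i))) (insert (Suc (2*i)) {0..2*i})" by auto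
  have "(\<Sum>j\<in>{0..2*Suc i}. P (int j)) = (\<Sum>j\<in>{0..2*i}. P (int j)) + P (2*int i+1) + P (2*int i + 2)"
    unfolding e by (simp add: algebra_simps)
  then show ?case using Suc by (simp add: algebra_simps)
qed

lemma R2: fixes Q :: "int \<Rightarrow> real"
  shows "(\<Sum>j\<in>{i+1..i+1+n::nat}. Q (2*int j) + Q (2*int j+1)/2 + Q (2*int j-1)/2)
     = Q (2*int i+1)/2 + (\<Sum>j\<in>{2*i+2..2*(i+1+n)}. Q (int j)) + Q (2*int (i+1+n)+1)/2"
proof (induction n)
  case 0
  have e: "{2*i+2..2*(i+1+0)} = {2*i+2}" by auto
  show ?case unfolding e by (simp add: algebra_simps)
next
  case (Suc n)
  have e1: "{i+1..i+1+Suc n} = insert (i+1+Suc n) {i+1..i+1+n}" by auto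
  have e2: "{2*i+2..2*(i+1+Suc n)} = insert (2*(i+1+n)+2) (insert (2*(i+1+n)+1) {2*i+2..2*(i+1+n)})" by auto
  show ?case unfolding e1 e2 using Suc by (simp add: algebra_simps)
qed

lemma FF_mono: assumes "good D" "m \<ge> 1" "i \<le> m"
  shows "FF D m i \<le> SCDL_m D (2*m)"
proof -
  define T where "T = real (i+1) / real m"
  define s where "s = real i / real m"
  define P where "P k = pospart (AA D (2*m) k T)" for k
  define Q where "Q k = pospart (- AA D (2*m) k s)" for k
  have MaxI: "FF D (2*m) i' \<le> SCDL_m D (2*m)" if "i' \<le> 2*m" for i'
    unfolding SCDL_m_FF[OF assms(1)] using that by (intro Max_ge) auto
  have low: "(\<Sum>j\<in>{0..i}. pospart (AA D m (int j) T)) \<le> (\<Sum>j\<in>{0..2*i}. P (int j)) + P (2*int i+1)/2"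
  proof -
    have "(\<Sum>j\<in>{0..i}. pospart (AA D m (int j) T)) \<le> (\<Sum>j\<in>{0..i}. P (2*int j) + P (2*int j+1)/2 + P (2*int j-1)/2)"
      unfolding P_def by (intro sum_mono, subst AA_split[OF assms(1)], rule pos_sub)
    also have "\<dots> = P (-1)/2 + (\<Sum>j\<in>{0..2*i}. P (int j)) + P (2*int i+1)/2" by (rule R1)
    also have "P (-1) = 0" unfolding P_def using AA_out[OF assms(1)] by (simp add: pospart_def)
    finally show ?thesis by simp
  qed
  show ?thesis
  proof (cases "i = m")
    case True
    have "FF D m i = (\<Sum>j\<in>{0..i}. pospart (AA D m (int j) T))" unfolding FF_def T_def True by simp
    also have "\<dots> \<le> (\<Sum>j\<in>{0..2*m}. P (int j))"
      using low AA_out(2)[OF assms(1)] unfolding P_def True by (simp add: pospart_def)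
    also have "\<dots> \<le> FF D (2*m) (2*m)"
    proof -
      have "(\<Sum>j\<in>{0..2*m}. P (int j)) \<le> (\<Sum>j\<in>{0..2*m}. pospart (AA D (2*m) (int j) (real (2*m+1) / real (2*m))))"
        unfolding P_def
      proof (intro sum_mono pos_mono AA_anti[OF assms(1)])
        show "real (2*m+1) / real (2*m) \<le> T" unfolding T_def True using assms(2) by (simp add: field_simps)
      qed
      then show ?thesis unfolding FF_def by simp
    qed
    also have "\<dots> \<le> SCDL_m D (2*m)" by (rule MaxI) simp
    finally show ?thesis .
  next
    case False
    hence im: "i < m" using assms(3) by simp
    then obtain n where n: "m = i + 1 + n" by (metis add.commute less_imp_Suc_add Suc_eq_plus1 add.assoc)
    have up: "(\<Sum>j\<in>{i+1..m}. pospart (- AA D m (int j) s)) \<le> Q (2*int i+1)/2 + (\<Sum>j\<in>{2*i+2..2*m}. Q (int j))"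
    proof -
      have "(\<Sum>j\<in>{i+1..m}. pospart (- AA D m (int j) s)) \<le> (\<Sum>j\<in>{i+1..m}. Q (2*int j) + Q (2*int j+1)/2 + Q (2*int j-1)/2)"
        unfolding Q_def by (intro sum_mono, subst AA_split[OF assms(1)], rule pos_sub_neg)
      also have "\<dots> = Q (2*int i+1)/2 + (\<Sum>j\<in>{2*i+2..2*m}. Q (int j)) + Q (2*int m+1)/2"
        unfolding n by (rule R2)
      also have "Q (2*int m+1) = 0" unfolding Q_def using AA_out(2)[OF assms(1)] by (simp add: pospart_def)
      finally show ?thesis by simp
    qed
    have F1: "(\<Sum>j\<in>{0..2*i}. P (int j)) + Q (2*int i+1) + (\<Sum>j\<in>{2*i+2..2*m}. Q (int j)) \<le> FF D (2*m) (2*i)"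
    proof -
      have a: "(\<Sum>j\<in>{0..2*i}. P (int j)) \<le> (\<Sum>j\<in>{0..2*i}. pospart (AA D (2*m) (int j) (real (2*i+1) / real (2*m))))"
        unfolding P_def
      proof (intro sum_mono pos_mono AA_anti[OF assms(1)])
        show "real (2*i+1) / real (2*m) \<le> T" unfolding T_def using assms(2) by (simp add: field_simps)
      qed
      have e: "{2*i+1..2*m} = insert (2*i+1) {2*i+2..2*m}" using im by auto
      have b: "(\<Sum>j\<in>{2*i+1..2*m}. pospart (- AA D (2*m) (int j) (real (2*i) / real (2*m))))
          = Q (2*int i+1) + (\<Sum>j\<in>{2*i+2..2*m}. Q (int j))"
      proof -
        have "real (2*i) / real (2*m) = s" unfolding s_def by simp
        then show ?thesis unfolding e Q_def by (simp add: add.commute)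
      qed
      show ?thesis using a b unfolding FF_def by simp
    qed
    have F2: "(\<Sum>j\<in>{0..2*i}. P (int j)) + P (2*int i+1) + (\<Sum>j\<in>{2*i+2..2*m}. Q (int j)) \<le> FF D (2*m) (2*i+1)"
    proof -
      have TT: "real (2*i+1+1) / real (2*m) = T" unfolding T_def using assms(2) by (simp add: field_simps)
      have e: "{0..2*i+1} = insert (2*i+1) {0..2*i}" by auto
      have a: "(\<Sum>j\<in>{0..2*i+1}. pospart (AA D (2*m) (int j) (real (2*i+1+1) / real (2*m))))
         = (\<Sum>j\<in>{0..2*i}. P (int j)) + P (2*int i+1)"
        unfolding TT e P_def by (simp add: add.commute)
      have b: "(\<Sum>j\<in>{2*i+2..2*m}. Q (int j)) \<le> (\<Sum>j\<in>{2*i+1+1..2*m}. pospart (- AA D (2*m) (int j) (real (2*i+1) / real (2*m))))"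
      proof -
        have e2: "{2*i+1+1..2*m} = {2*i+2..2*m}" by simp
        have "s \<le> real (2*i+1) / real (2*m)" unfolding s_def using assms(2) by (simp add: field_simps)
        then show ?thesis unfolding e2 Q_def
          by (intro sum_mono pos_mono le_imp_neg_le AA_anti[OF assms(1)])
      qed
      show ?thesis using a b unfolding FF_def by simp
    qed
    have "FF D m i \<le> (\<Sum>j\<in>{0..2*i}. P (int j)) + P (2*int i+1)/2 + Q (2*int i+1)/2 + (\<Sum>j\<in>{2*i+2..2*m}. Q (int j))"
      using low up unfolding FF_def T_def[symmetric] s_def[symmetric] by simp
    also have "\<dots> = (((\<Sum>j\<in>{0..2*i}. P (int j)) + Q (2*int i+1) + (\<Sum>j\<in>{2*i+2..2*m}. Q (int j)))
       + ((\<Sum>j\<in>{0..2*i}. P (int j)) + P (2*int i+1) + (\<Sum>j\<in>{2*i+2..2*m}. Q (int j)))) / 2"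
      by (simp add: field_simps)
    also have "\<dots> \<le> (SCDL_m D (2*m) + SCDL_m D (2*m)) / 2"
      using F1 F2 MaxI[of "2*i"] MaxI[of "2*i+1"] im by simp
    finally show ?thesis by simp
  qed
qed

lemma SCDL_m_mono: assumes "good D" "m \<ge> 1" shows "SCDL_m D m \<le> SCDL_m D (2*m)"
  unfolding SCDL_m_FF[OF assms(1), of m] using FF_mono[OF assms] by (subst Max_le_iff) auto




lemma support_sum:
  fixes f :: "int \<Rightarrow> real" and k :: int and n :: nat
  assumes nn: "\<And>j. 0 \<le> f j" and le: "\<And>j. f j \<le> B" and supp: "\<And>j. f j \<noteq> 0 \<Longrightarrow> k \<le> j \<and> j \<le> k + int n"
  shows "(\<Sum>j\<in>{0..m::nat}. f (int j)) \<le> real (n+1) * B"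
proof -
  define S where "S = {j\<in>{0..m}. f (int j) \<noteq> 0}"
  have "(\<Sum>j\<in>{0..m}. f (int j)) = (\<Sum>j\<in>S. f (int j))"
    unfolding S_def by (rule sum.mono_neutral_right) auto
  also have "\<dots> \<le> of_nat (card S) * B" by (rule sum_bounded_above) (rule le)
  also have "card S \<le> n + 1"
  proof -
    have "card S \<le> card {k..k + int n}"
    proof (rule card_inj_on_le)
      show "inj_on int S" by (simp add: inj_on_def)
      show "int ` S \<subseteq> {k..k + int n}" using supp unfolding S_def by auto
    qed auto
    also have "\<dots> = n + 1" by simp
    finally show ?thesis .
  qed
  hence "of_nat (card S) * B \<le> real (n+1) * B"
  proof -
    have "0 \<le> B" using nn[of 0] le[of 0] by simp
    moreover have "real (card S) \<le> real (n+1)" using \<open>card S \<le> n + 1\<close> by linarith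
    ultimately show ?thesis by (intro mult_right_mono) auto
  qed
  finally show ?thesis .
qed

lemma hat_sum_le: "(\<Sum>j\<in>{0..m}. hat m (int j) x) \<le> 2"
proof -
  define k where "k = floor (real m * x)"
  have "(\<Sum>j\<in>{0..m}. hat m (int j) x) \<le> real (1+1) * 1"
  proof (rule support_sum[where k=k])
    fix j :: int assume "hat m j x \<noteq> 0"
    hence "\<bar>real m * x - of_int j\<bar> < 1" unfolding hat_def by (auto simp: max_def split: if_splits)
    thus "k \<le> j \<and> j \<le> k + int 1" unfolding k_def by linarith
  qed (auto simp: hat_nn hat_le1)
  thus ?thesis by simp
qed

lemma pl_lip: fixes u v :: real shows "\<bar>max (1 - \<bar>u\<bar>) 0 - max (1 - \<bar>v\<bar>) 0\<bar> \<le> \<bar>u - v\<bar>"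
  by (smt (verit))

lemma mabs: "real m * \<bar>a - b\<bar> = \<bar>real m * a - real m * b\<bar>"
  by (simp add: abs_mult right_diff_distrib[symmetric])

lemma hat_lip: "\<bar>hat m j a - hat m j b\<bar> \<le> real m * \<bar>a - b\<bar>"
proof -
  have "\<bar>hat m j a - hat m j b\<bar> \<le> \<bar>(real m * a - of_int j) - (real m * b - of_int j)\<bar>"
    unfolding hat_def by (rule pl_lip)
  also have "\<dots> = real m * \<bar>a - b\<bar>" by (simp add: mabs)
  finally show ?thesis .
qed

lemma hat_sum_diff: "(\<Sum>j\<in>{0..m}. \<bar>hat m (int j) a - hat m (int j) b\<bar>) \<le> 4 * real m * \<bar>a - b\<bar>"
proof (cases "real m * \<bar>a - b\<bar> \<ge> 1")
  case True
  have "(\<Sum>j\<in>{0..m}. \<bar>hat m (int j) a - hat m (int j) b\<bar>) \<le> (\<Sum>j\<in>{0..m}. hat m (int j) a + hat m (int j) b)"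
    by (intro sum_mono) (use hat_nn in \<open>simp add: abs_le_iff\<close>)
  also have "\<dots> \<le> 4" using hat_sum_le[of m a] hat_sum_le[of m b] by (simp add: sum.distrib)
  finally show ?thesis using True by linarith
next
  case False
  define k where "k = floor (min (real m * a) (real m * b))"
  have "(\<Sum>j\<in>{0..m}. \<bar>hat m (int j) a - hat m (int j) b\<bar>) \<le> real (2+1) * (real m * \<bar>a - b\<bar>)"
  proof (rule support_sum[where k=k])
    fix j :: int assume "\<bar>hat m j a - hat m j b\<bar> \<noteq> 0"
    hence "hat m j a \<noteq> 0 \<or> hat m j b \<noteq> 0" by auto
    hence "\<bar>real m * a - of_int j\<bar> < 1 \<or> \<bar>real m * b - of_int j\<bar> < 1" unfolding hat_def by (auto simp: max_def split: if_splits)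
    moreover have "\<bar>real m * a - real m * b\<bar> < 1" using False by (simp add: mabs)
    ultimately show "k \<le> j \<and> j \<le> k + int 2" unfolding k_def by (simp add: min_def split: if_splits) linarith?
  qed (auto simp: hat_lip)
  also have "\<dots> \<le> 4 * real m * \<bar>a - b\<bar>" by simp
  finally show ?thesis .
qed




lemma pos_diff: "pospart x \<le> pospart y + \<bar>x - y\<bar>"
  unfolding pospart_def by simp

lemma split_sum: "i \<le> m \<Longrightarrow> (\<Sum>j\<in>{0..i}. f j) + (\<Sum>j\<in>{i+1..m}. f j) = (\<Sum>j\<in>{0..m::nat}. f j)"
proof -
  assume "i \<le> m"
  then obtain p where "m = i + p" using le_Suc_ex by blast
  then show ?thesis using sum.ub_add_nat[of 0 i f p] by simp
qed

lemma FF_diff: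
  assumes c: "\<And>j t. 0 \<le> t \<Longrightarrow> t \<le> 2 \<Longrightarrow> \<bar>AA D1 m j t - AA D2 m j t\<bar> \<le> c j"
    and m: "m \<ge> 1" and i: "i \<le> m"
  shows "FF D1 m i \<le> FF D2 m i + (\<Sum>j\<in>{0..m}. c (int j))"
proof -
  have t1: "0 \<le> real (i+1) / real m" "real (i+1) / real m \<le> 2" using m i by (auto simp: field_simps)
  have t2: "0 \<le> real i / real m" "real i / real m \<le> 2" using m i by (auto simp: field_simps)
  have "FF D1 m i \<le> (\<Sum>j\<in>{0..i}. pospart (AA D2 m (int j) (real (i + 1) / real m)) + c (int j))
    + (\<Sum>j\<in>{i+1..m}. pospart (- AA D2 m (int j) (real i / real m)) + c (int j))"
    unfolding FF_def
  proof (intro add_mono sum_mono)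
    fix j assume "j \<in> {0..i}"
    show "pospart (AA D1 m (int j) (real (i + 1) / real m)) \<le> pospart (AA D2 m (int j) (real (i + 1) / real m)) + c (int j)"
      using pos_diff c[OF t1] by (smt (verit))
  next
    fix j assume "j \<in> {i+1..m}"
    show "pospart (- AA D1 m (int j) (real i / real m)) \<le> pospart (- AA D2 m (int j) (real i / real m)) + c (int j)"
      using pos_diff c[OF t2] by (smt (verit))
  qed
  also have "\<dots> = FF D2 m i + ((\<Sum>j\<in>{0..i}. c (int j)) + (\<Sum>j\<in>{i+1..m}. c (int j)))"
    unfolding FF_def by (simp add: sum.distrib)
  also have "\<dots> = FF D2 m i + (\<Sum>j\<in>{0..m}. c (int j))" using split_sum[OF i] by simp
  finally show ?thesis .
qed

lemma FF_bnd:
  assumes c: "\<And>j t. 0 \<le> t \<Longrightarrow> t \<le> 2 \<Longrightarrow> \<bar>AA D m j t\<bar> \<le> c j"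
    and m: "m \<ge> 1" and i: "i \<le> m"
  shows "FF D m i \<le> (\<Sum>j\<in>{0..m}. c (int j))"
proof -
  have t1: "0 \<le> real (i+1) / real m" "real (i+1) / real m \<le> 2" using m i by (auto simp: field_simps)
  have t2: "0 \<le> real i / real m" "real i / real m \<le> 2" using m i by (auto simp: field_simps)
  have "FF D m i \<le> (\<Sum>j\<in>{0..i}. c (int j)) + (\<Sum>j\<in>{i+1..m}. c (int j))"
    unfolding FF_def
  proof (intro add_mono sum_mono)
    fix j assume "j \<in> {0..i}"
    show "pospart (AA D m (int j) (real (i + 1) / real m)) \<le> c (int j)"
      using c[OF t1, of "int j"] unfolding pospart_def by (simp add: abs_le_iff)
  next
    fix j assume "j \<in> {i+1..m}"
    show "pospart (- AA D m (int j) (real i / real m)) \<le> c (int j)"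
      using c[OF t2, of "int j"] unfolding pospart_def by (simp add: abs_le_iff)
  qed
  also have "\<dots> = (\<Sum>j\<in>{0..m}. c (int j))" using split_sum[OF i] by simp
  finally show ?thesis .
qed

lemma good_AA_bound: assumes "good D" "0 \<le> t" "t \<le> 2"
  shows "\<bar>AA D m j t\<bar> \<le> 3 * (\<integral>z. hat m j (fst z) \<partial>D)"
proof -
  have "\<bar>AA D m j t\<bar> \<le> (\<integral>z. \<bar>hat m j (fst z) * (yv (snd z) - t)\<bar> \<partial>D)"
    unfolding AA_def by (rule integral_abs_bound)
  also have "\<dots> \<le> (\<integral>z. 3 * hat m j (fst z) \<partial>D)"
  proof (rule integral_mono)
    show "integrable D (\<lambda>z. \<bar>hat m j (fst z) * (yv (snd z) - t)\<bar>)"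
      using integ_AA[OF assms(1)] by (rule integrable_abs)
    show "integrable D (\<lambda>z. 3 * hat m j (fst z))" using integ_hat[OF assms(1)] by simp
    fix z :: "real \<times> bool"
    have "\<bar>yv (snd z) - t\<bar> \<le> 3" using yv_01[of "snd z"] assms(2,3) by (simp add: abs_le_iff)
    then show "\<bar>hat m j (fst z) * (yv (snd z) - t)\<bar> \<le> 3 * hat m j (fst z)"
      using mult_left_mono[OF \<open>\<bar>yv (snd z) - t\<bar> \<le> 3\<close> hat_nn[of m j "fst z"]] hat_nn[of m j "fst z"]
      by (simp add: abs_mult mult.commute)
  qed
  finally show ?thesis by simp
qed

lemma SCDL_m_bound: assumes "good D" "m \<ge> 1" shows "SCDL_m D m \<le> 6"
proof -
  have "FF D m i \<le> 6" if "i \<le> m" for i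
  proof -
    have "FF D m i \<le> (\<Sum>j\<in>{0..m}. 3 * (\<integral>z. hat m (int j) (fst z) \<partial>D))"
      by (rule FF_bnd[OF good_AA_bound[OF assms(1)] assms(2) that])
    also have "\<dots> = 3 * (\<integral>z. (\<Sum>j\<in>{0..m}. hat m (int j) (fst z)) \<partial>D)"
      using integ_hat[OF assms(1)] by (simp add: sum_distrib_left)
    also have "\<dots> \<le> 3 * (\<integral>z. 2 \<partial>D)"
    proof -
      interpret prob_space D using assms(1) good_def by blast
      have "(\<integral>z. (\<Sum>j\<in>{0..m}. hat m (int j) (fst z)) \<partial>D) \<le> (\<integral>z. 2 \<partial>D)"
        by (intro integral_mono) (use integ_hat[OF assms(1)] hat_sum_le in auto)
      then show ?thesis by simp
    qed
    also have "\<dots> = 6"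
    proof -
      interpret prob_space D using assms(1) good_def by blast
      show ?thesis by (simp add: prob_space)
    qed
    finally show ?thesis .
  qed
  then show ?thesis unfolding SCDL_m_FF[OF assms(1)] by (subst Max_le_iff) auto
qed




declare hat_meas[measurable]

lemma yv_meas[measurable]: "yv \<in> borel_measurable (count_space UNIV)" by simp

locale Jset =
  fixes J :: "(real \<times> real \<times> bool) measure"
  assumes pJ: "prob_space J"
    and sJ: "sets J = sets (borel \<Otimes>\<^sub>M borel \<Otimes>\<^sub>M count_space UNIV)"
    and aeJ: "AE x in J. fst x \<in> {0..1} \<and> fst (snd x) \<in> {0..1}"
begin

interpretation P: prob_space J by (rule pJ)

lemma mJ: "f \<in> measurable (borel \<Otimes>\<^sub>M borel \<Otimes>\<^sub>M count_space UNIV) N \<Longrightarrow> f \<in> measurable J N"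
  using measurable_cong_sets[OF sJ refl] by blast

lemma g1m: "(\<lambda>x. (fst x, snd (snd x))) \<in> measurable J (borel \<Otimes>\<^sub>M count_space UNIV)"
  by (rule mJ) measurable

lemma g2m: "(\<lambda>x. (fst (snd x), snd (snd x))) \<in> measurable J (borel \<Otimes>\<^sub>M count_space UNIV)"
  by (rule mJ) measurable

lemma good1: "good (distr J (borel \<Otimes>\<^sub>M count_space UNIV) (\<lambda>x. (fst x, snd (snd x))))"
  unfolding good_def
proof (intro conjI)
  show "prob_space (distr J (borel \<Otimes>\<^sub>M count_space UNIV) (\<lambda>x. (fst x, snd (snd x))))"
    by (rule P.prob_space_distr[OF g1m])
  show "sets (distr J (borel \<Otimes>\<^sub>M count_space UNIV) (\<lambda>x. (fst x, snd (snd x)))) = sets (borel \<Otimes>\<^sub>M count_space UNIV)"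
    by simp
  show "AE z in distr J (borel \<Otimes>\<^sub>M count_space UNIV) (\<lambda>x. (fst x, snd (snd x))). fst z \<in> {0..1}"
    by (subst AE_distr_iff[OF g1m]) (measurable, use aeJ in \<open>auto elim: AE_mp\<close>)
qed

lemma good2: "good (distr J (borel \<Otimes>\<^sub>M count_space UNIV) (\<lambda>x. (fst (snd x), snd (snd x))))"
  unfolding good_def
proof (intro conjI)
  show "prob_space (distr J (borel \<Otimes>\<^sub>M count_space UNIV) (\<lambda>x. (fst (snd x), snd (snd x))))"
    by (rule P.prob_space_distr[OF g2m])
  show "sets (distr J (borel \<Otimes>\<^sub>M count_space UNIV) (\<lambda>x. (fst (snd x), snd (snd x)))) = sets (borel \<Otimes>\<^sub>M count_space UNIV)"
    by simp
  show "AE z in distr J (borel \<Otimes>\<^sub>M count_space UNIV) (\<lambda>x. (fst (snd x), snd (snd x))). fst z \<in> {0..1}"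
    by (subst AE_distr_iff[OF g2m]) (measurable, use aeJ in \<open>auto elim: AE_mp\<close>)
qed

lemma AA1: "AA (distr J (borel \<Otimes>\<^sub>M count_space UNIV) (\<lambda>x. (fst x, snd (snd x)))) m j t
   = (\<integral>x. hat m j (fst x) * (yv (snd (snd x)) - t) \<partial>J)"
  unfolding AA_def by (subst integral_distr[OF g1m]) (use meas_prod[OF hat_meas, of m j "\<lambda>y. yv y - t"] in simp_all)

lemma AA2: "AA (distr J (borel \<Otimes>\<^sub>M count_space UNIV) (\<lambda>x. (fst (snd x), snd (snd x)))) m j t
   = (\<integral>x. hat m j (fst (snd x)) * (yv (snd (snd x)) - t) \<partial>J)"
  unfolding AA_def by (subst integral_distr[OF g2m]) (use meas_prod[OF hat_meas, of m j "\<lambda>y. yv y - t"] in simp_all)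


lemma hat_diff1: "\<bar>hat m j a - hat m j' b\<bar> \<le> 1"
  using hat_nn[of m j a] hat_le1[of m j a] hat_nn[of m j' b] hat_le1[of m j' b] by (simp add: abs_le_iff)

lemma hat_yv3: assumes "0 \<le> t" "t \<le> 2" shows "\<bar>hat m j p * (yv y - t)\<bar> \<le> 3"
proof -
  have "\<bar>yv y - t\<bar> \<le> 3" using yv_01[of y] assms by (simp add: abs_le_iff)
  then have "\<bar>hat m j p\<bar> * \<bar>yv y - t\<bar> \<le> 1 * 3"
    using hat_nn[of m j p] hat_le1[of m j p] by (intro mult_mono) auto
  then show ?thesis by (simp add: abs_mult)
qed

lemma hatd_yv3: assumes "0 \<le> t" "t \<le> 2" shows "\<bar>(hat m j a - hat m j b) * (yv y - t)\<bar> \<le> 3"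
proof -
  have "\<bar>yv y - t\<bar> \<le> 3" using yv_01[of y] assms by (simp add: abs_le_iff)
  then have "\<bar>hat m j a - hat m j b\<bar> * \<bar>yv y - t\<bar> \<le> 1 * 3"
    using hat_diff1[of m j a j b] by (intro mult_mono) auto
  then show ?thesis by (simp add: abs_mult)
qed

lemma intJ: fixes f :: "_ \<Rightarrow> real" and B :: real shows "f \<in> borel_measurable (borel \<Otimes>\<^sub>M borel \<Otimes>\<^sub>M count_space UNIV) \<Longrightarrow> (AE x in J. \<bar>f x\<bar> \<le> B) \<Longrightarrow> integrable J f"
  by (rule P.integrable_const_bound[where B=B]) (auto intro: mJ)

lemma int_dh: "integrable J (\<lambda>x. \<bar>hat m j (fst x) - hat m j (fst (snd x))\<bar>)"
  by (rule intJ[where B=1]) (measurable, simp add: hat_diff1)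

lemma int_e: "integrable J (\<lambda>x. \<bar>fst x - fst (snd x)\<bar>)"
  by (rule intJ[where B=1]) (measurable, use aeJ in \<open>auto elim!: AE_mp\<close>)

lemma e_bounds: "0 \<le> (\<integral>x. \<bar>fst x - fst (snd x)\<bar> \<partial>J)" "(\<integral>x. \<bar>fst x - fst (snd x)\<bar> \<partial>J) \<le> 1"
proof -
  show "0 \<le> (\<integral>x. \<bar>fst x - fst (snd x)\<bar> \<partial>J)" by simp
  have "(\<integral>x. \<bar>fst x - fst (snd x)\<bar> \<partial>J) \<le> (\<integral>x. 1 \<partial>J)"
    by (rule integral_mono_AE[OF int_e]) (simp, use aeJ in \<open>auto elim!: AE_mp\<close>)
  then show "(\<integral>x. \<bar>fst x - fst (snd x)\<bar> \<partial>J) \<le> 1" by (simp add: P.prob_space)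
qed

lemma AA_lip:
  assumes "0 \<le> t" "t \<le> 2"
  shows "\<bar>AA (distr J (borel \<Otimes>\<^sub>M count_space UNIV) (\<lambda>x. (fst x, snd (snd x)))) m j t
     - AA (distr J (borel \<Otimes>\<^sub>M count_space UNIV) (\<lambda>x. (fst (snd x), snd (snd x)))) m j t\<bar>
    \<le> 3 * (\<integral>x. \<bar>hat m j (fst x) - hat m j (fst (snd x))\<bar> \<partial>J)"
proof -
  have i1: "integrable J (\<lambda>x. hat m j (fst x) * (yv (snd (snd x)) - t))"
    by (rule intJ[where B=3]) (measurable, simp add: hat_yv3[OF assms])
  have i2: "integrable J (\<lambda>x. hat m j (fst (snd x)) * (yv (snd (snd x)) - t))"
    by (rule intJ[where B=3]) (measurable, simp add: hat_yv3[OF assms])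
  have "\<bar>(\<integral>x. hat m j (fst x) * (yv (snd (snd x)) - t) \<partial>J) - (\<integral>x. hat m j (fst (snd x)) * (yv (snd (snd x)) - t) \<partial>J)\<bar>
     = \<bar>\<integral>x. (hat m j (fst x) - hat m j (fst (snd x))) * (yv (snd (snd x)) - t) \<partial>J\<bar>"
    using Bochner_Integration.integral_diff[OF i1 i2] by (simp add: algebra_simps)
  also have "\<dots> \<le> (\<integral>x. \<bar>(hat m j (fst x) - hat m j (fst (snd x))) * (yv (snd (snd x)) - t)\<bar> \<partial>J)"
    by (rule integral_abs_bound)
  also have "\<dots> \<le> (\<integral>x. 3 * \<bar>hat m j (fst x) - hat m j (fst (snd x))\<bar> \<partial>J)"
  proof (rule integral_mono)
    show "integrable J (\<lambda>x. \<bar>(hat m j (fst x) - hat m j (fst (snd x))) * (yv (snd (snd x)) - t)\<bar>)"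
      by (rule integrable_abs, rule intJ[where B=3]) (measurable, simp add: hatd_yv3[OF assms])
    show "integrable J (\<lambda>x. 3 * \<bar>hat m j (fst x) - hat m j (fst (snd x))\<bar>)" using int_dh by simp
    fix x :: "real \<times> real \<times> bool"
    have "\<bar>yv (snd (snd x)) - t\<bar> \<le> 3" using yv_01[of "snd (snd x)"] assms by (simp add: abs_le_iff)
    then show "\<bar>(hat m j (fst x) - hat m j (fst (snd x))) * (yv (snd (snd x)) - t)\<bar> \<le> 3 * \<bar>hat m j (fst x) - hat m j (fst (snd x))\<bar>"
      using mult_left_mono[OF \<open>\<bar>yv (snd (snd x)) - t\<bar> \<le> 3\<close> abs_ge_zero[of "hat m j (fst x) - hat m j (fst (snd x))"]]
      by (simp add: abs_mult mult.commute)
  qed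
  finally show ?thesis unfolding AA1 AA2 by simp
qed

lemma SCDL_lip:
  assumes m: "m \<ge> 1"
  shows "SCDL_m (distr J (borel \<Otimes>\<^sub>M count_space UNIV) (\<lambda>x. (fst x, snd (snd x)))) m
    \<le> SCDL_m (distr J (borel \<Otimes>\<^sub>M count_space UNIV) (\<lambda>x. (fst (snd x), snd (snd x)))) m
      + 12 * real m * (\<integral>x. \<bar>fst x - fst (snd x)\<bar> \<partial>J)"
proof -
  define D1 where "D1 = distr J (borel \<Otimes>\<^sub>M count_space UNIV) (\<lambda>x. (fst x, snd (snd x)))"
  define D2 where "D2 = distr J (borel \<Otimes>\<^sub>M count_space UNIV) (\<lambda>x. (fst (snd x), snd (snd x)))"
  define e where "e = (\<integral>x. \<bar>fst x - fst (snd x)\<bar> \<partial>J)"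
  have S: "(\<Sum>j\<in>{0..m}. 3 * (\<integral>x. \<bar>hat m (int j) (fst x) - hat m (int j) (fst (snd x))\<bar> \<partial>J)) \<le> 12 * real m * e"
  proof -
    have "(\<Sum>j\<in>{0..m}. 3 * (\<integral>x. \<bar>hat m (int j) (fst x) - hat m (int j) (fst (snd x))\<bar> \<partial>J))
       = 3 * (\<integral>x. (\<Sum>j\<in>{0..m}. \<bar>hat m (int j) (fst x) - hat m (int j) (fst (snd x))\<bar>) \<partial>J)"
      using int_dh by (simp add: sum_distrib_left)
    also have "\<dots> \<le> 3 * (\<integral>x. 4 * real m * \<bar>fst x - fst (snd x)\<bar> \<partial>J)"
    proof -
      have "(\<integral>x. (\<Sum>j\<in>{0..m}. \<bar>hat m (int j) (fst x) - hat m (int j) (fst (snd x))\<bar>) \<partial>J)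
         \<le> (\<integral>x. 4 * real m * \<bar>fst x - fst (snd x)\<bar> \<partial>J)"
        by (rule integral_mono) (use int_dh int_e hat_sum_diff in auto)
      then show ?thesis by simp
    qed
    also have "\<dots> = 12 * real m * e" unfolding e_def by simp
    finally show ?thesis .
  qed
  have "FF D1 m i \<le> SCDL_m D2 m + 12 * real m * e" if "i \<le> m" for i
  proof -
    have "FF D1 m i \<le> FF D2 m i + (\<Sum>j\<in>{0..m}. 3 * (\<integral>x. \<bar>hat m (int j) (fst x) - hat m (int j) (fst (snd x))\<bar> \<partial>J))"
      unfolding D1_def D2_def by (rule FF_diff[OF AA_lip m that])
    moreover have "FF D2 m i \<le> SCDL_m D2 m" unfolding SCDL_m_FF[OF good2[folded D2_def]]
      using that by (intro Max_ge) auto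
    ultimately show ?thesis using S by linarith
  qed
  then show ?thesis unfolding D1_def[symmetric] D2_def[symmetric] e_def[symmetric] SCDL_m_FF[OF good1[folded D1_def]]
    by (subst Max_le_iff) auto
qed

lemma AA_lip':
  assumes "0 \<le> t" "t \<le> 2"
  shows "\<bar>AA (distr J (borel \<Otimes>\<^sub>M count_space UNIV) (\<lambda>x. (fst (snd x), snd (snd x)))) m j t
     - AA (distr J (borel \<Otimes>\<^sub>M count_space UNIV) (\<lambda>x. (fst x, snd (snd x)))) m j t\<bar>
    \<le> 3 * (\<integral>x. \<bar>hat m j (fst x) - hat m j (fst (snd x))\<bar> \<partial>J)"
  using AA_lip[OF assms, of m j] by (simp add: abs_minus_commute)

lemma SCDL_lip2:
  assumes m: "m \<ge> 1"
  shows "SCDL_m (distr J (borel \<Otimes>\<^sub>M count_space UNIV) (\<lambda>x. (fst (snd x), snd (snd x)))) m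
    \<le> SCDL_m (distr J (borel \<Otimes>\<^sub>M count_space UNIV) (\<lambda>x. (fst x, snd (snd x)))) m
      + 12 * real m * (\<integral>x. \<bar>fst x - fst (snd x)\<bar> \<partial>J)"
proof -
  define D2 where "D2 = distr J (borel \<Otimes>\<^sub>M count_space UNIV) (\<lambda>x. (fst x, snd (snd x)))"
  define D1 where "D1 = distr J (borel \<Otimes>\<^sub>M count_space UNIV) (\<lambda>x. (fst (snd x), snd (snd x)))"
  define e where "e = (\<integral>x. \<bar>fst x - fst (snd x)\<bar> \<partial>J)"
  have S: "(\<Sum>j\<in>{0..m}. 3 * (\<integral>x. \<bar>hat m (int j) (fst x) - hat m (int j) (fst (snd x))\<bar> \<partial>J)) \<le> 12 * real m * e"
  proof -
    have "(\<Sum>j\<in>{0..m}. 3 * (\<integral>x. \<bar>hat m (int j) (fst x) - hat m (int j) (fst (snd x))\<bar> \<partial>J))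
       = 3 * (\<integral>x. (\<Sum>j\<in>{0..m}. \<bar>hat m (int j) (fst x) - hat m (int j) (fst (snd x))\<bar>) \<partial>J)"
      using int_dh by (simp add: sum_distrib_left)
    also have "\<dots> \<le> 3 * (\<integral>x. 4 * real m * \<bar>fst x - fst (snd x)\<bar> \<partial>J)"
    proof -
      have "(\<integral>x. (\<Sum>j\<in>{0..m}. \<bar>hat m (int j) (fst x) - hat m (int j) (fst (snd x))\<bar>) \<partial>J)
         \<le> (\<integral>x. 4 * real m * \<bar>fst x - fst (snd x)\<bar> \<partial>J)"
        by (rule integral_mono) (use int_dh int_e hat_sum_diff in auto)
      then show ?thesis by simp
    qed
    also have "\<dots> = 12 * real m * e" unfolding e_def by simp
    finally show ?thesis .
  qed
  have "FF D1 m i \<le> SCDL_m D2 m + 12 * real m * e" if "i \<le> m" for i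
  proof -
    have "FF D1 m i \<le> FF D2 m i + (\<Sum>j\<in>{0..m}. 3 * (\<integral>x. \<bar>hat m (int j) (fst x) - hat m (int j) (fst (snd x))\<bar> \<partial>J))"
      unfolding D1_def D2_def by (rule FF_diff[OF AA_lip' m that])
    moreover have "FF D2 m i \<le> SCDL_m D2 m" unfolding SCDL_m_FF[OF good1[folded D2_def]]
      using that by (intro Max_ge) auto
    ultimately show ?thesis using S by linarith
  qed
  then show ?thesis unfolding D1_def[symmetric] D2_def[symmetric] e_def[symmetric] SCDL_m_FF[OF good2[folded D1_def]]
    by (subst Max_le_iff) auto
qed

end




lemma SCDL_nn: "0 \<le> SCDL D"
  unfolding SCDL_def by (intro cINF_greatest) (auto simp: le_max_iff_disj)

lemma sq_to_abs:
  fixes s1 s2 C e :: real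
  assumes "0 \<le> s1" "0 \<le> s2" "\<bar>s1^2 - s2^2\<bar> \<le> C * e" "1 \<le> C" "0 \<le> e"
  shows "\<bar>s1 - s2\<bar> \<le> C * sqrt e"
proof -
  have h1: "\<bar>s1 - s2\<bar> \<le> s1 + s2" using assms(1,2) by linarith
  have h2: "\<bar>s1 - s2\<bar> * \<bar>s1 - s2\<bar> \<le> \<bar>s1 - s2\<bar> * (s1 + s2)"
    by (rule mult_left_mono[OF h1 abs_ge_zero])
  have h3: "s1^2 - s2^2 = (s1 - s2) * (s1 + s2)" by (simp add: power2_eq_square algebra_simps)
  have h4: "\<bar>s1^2 - s2^2\<bar> = \<bar>s1 - s2\<bar> * (s1 + s2)" unfolding h3 abs_mult using assms(1,2) by simp
  have h5: "C * e \<le> C * C * e" using assms(4,5) by (simp add: mult_right_mono)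
  have h6: "(C * sqrt e)^2 = C * C * e" using assms(5) by (simp add: power2_eq_square)
  have "\<bar>s1 - s2\<bar> * \<bar>s1 - s2\<bar> \<le> C * C * e"
    using h2 h4 assms(3) h5 by linarith
  then have "\<bar>s1 - s2\<bar>^2 \<le> (C * sqrt e)^2" unfolding h6 by (simp add: power2_eq_square)
  moreover have "0 \<le> C * sqrt e" using assms(4,5) by simp
  ultimately show ?thesis by (rule power2_le_imp_le)
qed

theorem theorem5p1:
  shows "\<exists>C>0. \<forall>J :: (real \<times> real \<times> bool) measure.
    prob_space J \<longrightarrow>
    sets J = sets (borel \<Otimes>\<^sub>M borel \<Otimes>\<^sub>M count_space UNIV) \<longrightarrow>
    (AE x in J. fst x \<in> {0..1} \<and> fst (snd x) \<in> {0..1}) \<longrightarrow>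
    (let D1 = distr J (borel \<Otimes>\<^sub>M count_space UNIV) (\<lambda>x. (fst x, snd (snd x)));
         D2 = distr J (borel \<Otimes>\<^sub>M count_space UNIV) (\<lambda>x. (fst (snd x), snd (snd x)));
         E = (\<integral>x. \<bar>fst x - fst (snd x)\<bar> \<partial>J)
     in \<bar>(SCDL D1)\<^sup>2 - (SCDL D2)\<^sup>2\<bar> \<le> C * E \<and>
        \<bar>SCDL D1 - SCDL D2\<bar> \<le> C * sqrt E)"
proof (intro exI[of _ "(1+2*12)^2 + 4*12*6 + 4*12^2 + 4*12 :: real"] conjI allI impI)
  define C :: real where "C = (1+2*12)^2 + 4*12*6 + 4*12^2 + 4*12"
  show "0 < (1+2*12)^2 + 4*12*6 + 4*12^2 + 4*(12::real)" by simp
  fix J :: "(real \<times> real \<times> bool) measure"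
  assume a: "prob_space J" "sets J = sets (borel \<Otimes>\<^sub>M borel \<Otimes>\<^sub>M count_space UNIV)"
    "AE x in J. fst x \<in> {0..1} \<and> fst (snd x) \<in> {0..1}"
  interpret Jset J by (rule Jset.intro[OF a])
  define D1 where "D1 = distr J (borel \<Otimes>\<^sub>M count_space UNIV) (\<lambda>x. (fst x, snd (snd x)))"
  define D2 where "D2 = distr J (borel \<Otimes>\<^sub>M count_space UNIV) (\<lambda>x. (fst (snd x), snd (snd x)))"
  define e where "e = (\<integral>x. \<bar>fst x - fst (snd x)\<bar> \<partial>J)"
  have g1: "good D1" unfolding D1_def by (rule good1)
  have g2: "good D2" unfolding D2_def by (rule good2)
  have e: "0 \<le> e" "e \<le> 1" unfolding e_def using e_bounds by auto
  have p1: "(1::nat) \<le> 2^k" for k by simp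
  have d12: "(SCDL D1)^2 \<le> (SCDL D2)^2 + C * e"
    unfolding SCDL_def C_def
  proof (rule abstract_bound[where L=12 and B=6 and e=e])
    fix k :: nat assume "k \<ge> 1"
    show "SCDL_m D2 (2^k) \<le> SCDL_m D2 (2^Suc k)" using SCDL_m_mono[OF g2 p1[of k]] by simp
    show "SCDL_m D2 (2^k) \<le> 6" using SCDL_m_bound[OF g2 p1[of k]] .
    show "SCDL_m D1 (2^k) \<le> SCDL_m D2 (2^k) + 12 * 2^k * e"
      using SCDL_lip[OF p1[of k]] unfolding D1_def D2_def e_def by simp
  qed (use e in auto)
  have d21: "(SCDL D2)^2 \<le> (SCDL D1)^2 + C * e"
    unfolding SCDL_def C_def
  proof (rule abstract_bound[where L=12 and B=6 and e=e])
    fix k :: nat assume "k \<ge> 1"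
    show "SCDL_m D1 (2^k) \<le> SCDL_m D1 (2^Suc k)" using SCDL_m_mono[OF g1 p1[of k]] by simp
    show "SCDL_m D1 (2^k) \<le> 6" using SCDL_m_bound[OF g1 p1[of k]] .
    show "SCDL_m D2 (2^k) \<le> SCDL_m D1 (2^k) + 12 * 2^k * e"
      using SCDL_lip2[OF p1[of k]] unfolding D1_def D2_def e_def by simp
  qed (use e in auto)
  have sq: "\<bar>(SCDL D1)^2 - (SCDL D2)^2\<bar> \<le> C * e" using d12 d21 by linarith
  have ab: "\<bar>SCDL D1 - SCDL D2\<bar> \<le> C * sqrt e"
    by (rule sq_to_abs[OF SCDL_nn SCDL_nn sq]) (use e in \<open>auto simp: C_def\<close>)
  show "let D1 = distr J (borel \<Otimes>\<^sub>M count_space UNIV) (\<lambda>x. (fst x, snd (snd x)));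
         D2 = distr J (borel \<Otimes>\<^sub>M count_space UNIV) (\<lambda>x. (fst (snd x), snd (snd x)));
         E = (\<integral>x. \<bar>fst x - fst (snd x)\<bar> \<partial>J)
     in \<bar>(SCDL D1)\<^sup>2 - (SCDL D2)\<^sup>2\<bar> \<le> ((1+2*12)^2 + 4*12*6 + 4*12^2 + 4*12) * E \<and>
        \<bar>SCDL D1 - SCDL D2\<bar> \<le> ((1+2*12)^2 + 4*12*6 + 4*12^2 + 4*12) * sqrt E"
    using sq ab unfolding Let_def D1_def[symmetric] D2_def[symmetric] e_def[symmetric] C_def by simp
qed


end
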